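(* Let $n\ge 2$, let $\mathcal{S}\subseteq(\mathbb{C}^d)^{\otimes n}$ be the permutation-symmetric subspace, and let $|\psi\rangle,|\varphi\rangle\in\mathcal{S}$ be such that $A_1\otimes\cdots\otimes A_n|\psi\rangle=|\varphi\rangle$ for some invertible $d\times d$ matrices $A_1,\ldots,A_n$. Then there is an invertible $d\times d$ matrix $A$ such that for every $d\times d$ matrix $B$ with $B_{(1)}|\psi\rangle\in\mathcal{S}$ one has $(ABA^{-1})_{(1)}|\varphi\rangle\in\mathcal{S}$, and for every $B'$ with $B'_{(1)}|\varphi\rangle\in\mathcal{S}$ one has $(A^{-1}B'A)_{(1)}|\psi\rangle\in\mathcal{S}$. In particular, the set of Jordan normal forms of matrices $B$ with $B_{(1)}|\psi\rangle\in\mathcal{S}$ coincides with that for $|\varphi\rangle$.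
   Context: $\mathcal{S}$ is the set of vectors in $(\mathbb{C}^d)^{\otimes n}$ invariant under all permutations of the $n$ tensor factors. For a $d\times d$ matrix $Y$, $Y_{(1)}$ denotes $Y\otimes\mathbb{I}\otimes\cdots\otimes\mathbb{I}$ on $(\mathbb{C}^d)^{\otimes n}$. *)

theory Defs
  imports "HOL-Analysis.Analysis" "HOL-Combinatorics.Permutations"
begin

text \<open>Tensors in (C^d)^{\<otimes>n}: the basis of C^d is indexed by the finite type 'd,
  a tensor is a coefficient function on index words of length n (zero elsewhere).\<close>

definition is_tensor :: "nat \<Rightarrow> ('d::finite list \<Rightarrow> complex) \<Rightarrow> bool" where
  "is_tensor n T \<longleftrightarrow> (\<forall>xs. length xs \<noteq> n \<longrightarrow> T xs = 0)"

definition sym_space :: "nat \<Rightarrow> ('d::finite list \<Rightarrow> complex) set" where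
  "sym_space n = {T. is_tensor n T \<and>
      (\<forall>p xs. p permutes {..<n} \<and> length xs = n \<longrightarrow> T (permute_list p xs) = T xs)}"

definition kron_apply :: "(nat \<Rightarrow> complex^'d^'d) \<Rightarrow> nat \<Rightarrow> ('d::finite list \<Rightarrow> complex) \<Rightarrow> ('d list \<Rightarrow> complex)" where
  "kron_apply As n T = (\<lambda>xs. if length xs = n then
      (\<Sum>ys\<in>{ys. length ys = n}. (\<Prod>k<n. As k $ (xs ! k) $ (ys ! k)) * T ys) else 0)"

definition first_apply :: "complex^'d^'d \<Rightarrow> nat \<Rightarrow> ('d::finite list \<Rightarrow> complex) \<Rightarrow> ('d list \<Rightarrow> complex)" where
  "first_apply Y n T = kron_apply (\<lambda>k. if k = 0 then Y else mat 1) n T"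

end

theory Submission
  imports Defs "HOL-Computational_Algebra.Computational_Algebra" "HOL-Computational_Algebra.Field_as_Ring"
begin

lemma hensel_sqrt:
  fixes l :: complex
  assumes "l \<noteq> 0"
  shows "\<exists>p. [:-l,1:]^(Suc m) dvd p^2 - [:0,1:] \<and> poly p l \<noteq> 0"
proof (induction m)
  case 0
  have "[:csqrt l:]^2 - [:0,1:] = [:-l,1:] * [:-1:]"
    using power2_csqrt[of l] by (simp add: power2_eq_square)
  then have "[:-l,1:] dvd [:csqrt l:]^2 - [:0,1:]" by (simp only: dvd_triv_left)
  then have "[:-l,1:]^(Suc 0) dvd [:csqrt l:]^2 - [:0,1:]" by simp
  then show ?case using assms by (intro exI[of _ "[:csqrt l:]"]) auto
next
  case (Suc m)
  then obtain p h where ph: "p^2 - [:0,1:] = [:-l,1:]^(Suc m) * h" and pl: "poly p l \<noteq> 0"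
    by (auto elim!: dvdE)
  define c where "c = - poly h l / (2 * poly p l)"
  define t :: "complex poly" where "t = [:-l,1:]"
  define p' where "p' = p + smult c (t^(Suc m))"
  have e1: "p'^2 = p^2 + t^(Suc m) * (smult c p + smult c p + smult (c^2) (t^(Suc m)))"
    unfolding p'_def by (simp add: power2_eq_square algebra_simps)
  have "p'^2 - [:0,1:] = t^(Suc m) * (h + smult c p + smult c p + smult (c^2) (t^(Suc m)))"
  proof -
    have "p'^2 - [:0,1:] = (p^2 - [:0,1:]) + t^(Suc m) * (smult c p + smult c p + smult (c^2) (t^(Suc m)))"
      unfolding e1 by (simp only: diff_add_eq add.commute add.left_commute)
    also have "\<dots> = t^(Suc m) * h + t^(Suc m) * (smult c p + smult c p + smult (c^2) (t^(Suc m)))"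
      using ph unfolding t_def by simp
    finally show ?thesis by (simp only: distrib_left add.assoc)
  qed
  moreover have "t dvd h + smult c p + smult c p + smult (c^2) (t^(Suc m))"
  proof -
    have "poly (h + smult c p + smult c p) l = 0" using pl by (simp add: c_def field_simps)
    then have "t dvd h + smult c p + smult c p" unfolding t_def by (simp only: poly_eq_0_iff_dvd[symmetric])
    moreover have "t dvd smult (c^2) (t^(Suc m))" by (simp add: dvd_smult)
    ultimately show ?thesis by (rule dvd_add)
  qed
  ultimately have "t^(Suc (Suc m)) dvd p'^2 - [:0,1:]"
    by (metis dvd_mult2 mult_dvd_mono power_Suc2 dvd_refl)
  moreover have "poly p' l \<noteq> 0" using pl by (simp add: p'_def t_def)
  ultimately show ?case unfolding t_def by blast
qed

lemma lin_coprime: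
  fixes g :: "complex poly"
  assumes ng: "\<not> [:-l,1:] dvd g"
  shows "coprime [:-l,1:] g"
proof (rule coprimeI)
  have irr: "irreducible [:-l,1::complex:]" by (rule irreducible_linear_field_poly) simp
  fix c assume c1: "c dvd [:-l,1:]" and c2: "c dvd g"
  then obtain d where pd: "[:-l,1:] = c * d" by (auto elim: dvdE)
  then have "is_unit c \<or> is_unit d" using irr irreducibleD by blast
  then show "is_unit c"
  proof
    assume d: "is_unit d"
    have "[:-l,1:] dvd c * d" using pd by simp
    then have "[:-l,1:] dvd c" using d by (simp add: dvd_mult_unit_iff)
    then have "[:-l,1:] dvd g" using c2 dvd_trans by blast
    with ng show ?thesis by contradiction
  qed simp
qed

lemma poly_sqrt_mod:
  fixes q :: "complex poly"
  assumes "poly q 0 \<noteq> 0"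
  shows "\<exists>p. q dvd p^2 - [:0,1:]"
  using assms
proof (induction "degree q" arbitrary: q rule: less_induct)
  case less
  show ?case
  proof (cases "degree q = 0")
    case True
    obtain a where qa: "q = [:a:]" using True degree_eq_zeroE by blast
    have "a \<noteq> 0" using less.prems qa by simp
    then have "is_unit q" using qa by (simp add: is_unit_pCons_iff)
    then have "q dvd [:0:]^2 - [:0,1:]" by (rule unit_imp_dvd)
    then show ?thesis by blast
  next
    case False
    then have "\<not> constant (poly q)" using constant_degree[of q] by simp
    then obtain l where l: "poly q l = 0"
      using fundamental_theorem_of_algebra[of q] by blast
    have q0: "q \<noteq> 0" using less.prems by auto
    have l0: "l \<noteq> 0" using l less.prems by auto
    define m where "m = order l q"
    obtain g where g: "q = [:-l,1:]^m * g" and ng: "\<not> [:-l,1:] dvd g"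
      using order_decomp[OF q0] unfolding m_def by blast
    have "order l q \<noteq> 0" using l q0 order_root[of q l] by simp
    then have m1: "m \<ge> 1" unfolding m_def by simp
    have g0: "g \<noteq> 0" using g q0 by auto
    have "degree q = m + degree g" using g g0 by (simp add: degree_mult_eq degree_power_eq)
    then have dg: "degree g < degree q" using m1 by simp
    have "poly g 0 \<noteq> 0" using less.prems g by simp
    then obtain p1 where p1: "g dvd p1^2 - [:0,1:]" using less.hyps[OF dg] by blast
    obtain p2 where p2: "[:-l,1:]^m dvd p2^2 - [:0,1:]"
      using hensel_sqrt[OF l0, of "m - 1"] m1 by auto
    define a where "a = [:-l,1:]^m"
    have cop: "coprime a g"
    proof -
      have "coprime [:-l,1:] g"
        using ng by (rule lin_coprime)
      then show ?thesis unfolding a_def by simp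
    qed
    have gcd1: "gcd a g = 1" using cop by (rule coprime_imp_gcd_eq_1)
    define u where "u = fst (bezout_coefficients a g)"
    define v where "v = snd (bezout_coefficients a g)"
    have uv: "u * a + v * g = 1"
      using bezout_coefficients_fst_snd[of a g] gcd1 unfolding u_def v_def by simp
    have vg: "v * g = 1 - u * a" using uv by (simp add: eq_diff_eq add.commute)
    have ua: "u * a = 1 - v * g" using uv by (simp add: eq_diff_eq)
    define p where "p = p2 * v * g + p1 * u * a"
    have "a dvd p^2 - [:0,1:]"
    proof -
      have "p - p2 = p2 * (v * g) + p1 * u * a - p2" unfolding p_def by (simp add: mult.assoc)
      also have "\<dots> = p2 * (1 - u * a) + p1 * u * a - p2" by (simp only: vg)
      also have "\<dots> = a * (u * (p1 - p2))" by (simp add: algebra_simps)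
      finally have "a dvd p - p2" by simp
      then have d1: "a dvd (p - p2) * (p + p2)" by simp
      have e: "p^2 - [:0,1:] = (p - p2) * (p + p2) + (p2^2 - [:0,1:])"
        by (simp add: power2_eq_square algebra_simps)
      have d2: "a dvd p2^2 - [:0,1:]" using p2 unfolding a_def .
      show ?thesis unfolding e using d1 d2 by (rule dvd_add)
    qed
    moreover have "g dvd p^2 - [:0,1:]"
    proof -
      have "p - p1 = p2 * v * g + p1 * (u * a) - p1" unfolding p_def by (simp add: mult.assoc)
      also have "\<dots> = p2 * v * g + p1 * (1 - v * g) - p1" by (simp only: ua)
      also have "\<dots> = g * (v * (p2 - p1))" by (simp add: algebra_simps)
      finally have "g dvd p - p1" by simp
      then have d1: "g dvd (p - p1) * (p + p1)" by simp
      have e: "p^2 - [:0,1:] = (p - p1) * (p + p1) + (p1^2 - [:0,1:])"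
        by (simp add: power2_eq_square algebra_simps)
      show ?thesis unfolding e using d1 p1 by (rule dvd_add)
    qed
    ultimately have "a * g dvd p^2 - [:0,1:]" using cop by (simp add: divides_mult)
    then show ?thesis using g unfolding a_def by blast
  qed
qed


lemma matrix_add_rdistrib: "((A::'a::semiring_1^'n^'m) + B) ** C = A ** C + B ** C"
  by (vector matrix_matrix_mult_def sum.distrib[symmetric] field_simps)

lemma mat_mult_entry: "(mat c ** (X::'a::comm_semiring_1^'n^'n)) $ i $ j = c * X $ i $ j"
  by (simp add: matrix_matrix_mult_def mat_def if_distrib if_distribR sum.delta' cong: if_cong)

lemma mult_mat_entry: "((X::'a::comm_semiring_1^'n^'n) ** mat c) $ i $ j = c * X $ i $ j"
  by (simp add: matrix_matrix_mult_def mat_def if_distrib if_distribR sum.delta' mult.commute cong: if_cong)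

lemma mat_commute: "mat c ** (X::'a::comm_semiring_1^'n^'n) = X ** mat c"
  by (simp add: vec_eq_iff mat_mult_entry mult_mat_entry)

lemma mat_add: "mat (a + b) = (mat a + mat b :: 'a::semiring_1^'n^'n)"
  by (simp add: vec_eq_iff mat_def)

lemma mat_mat: "mat a ** mat b = (mat (a * b) :: 'a::comm_semiring_1^'n^'n)"
  by (simp add: vec_eq_iff mat_mult_entry) (simp add: mat_def)

lemma mat_assoc_left: "mat c ** (X ** Y) = (mat c ** X) ** (Y::'a::comm_semiring_1^'n^'n)"
  by (simp add: matrix_mul_assoc)

definition meval :: "complex poly \<Rightarrow> complex^'d^'d \<Rightarrow> complex^'d^'d" where
  "meval p M = foldr (\<lambda>a X. mat a + M ** X) (coeffs p) 0"

lemma meval_0[simp]: "meval 0 M = 0"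
  by (simp add: meval_def)

lemma meval_pCons: "meval (pCons a p) M = mat a + M ** meval p M"
  by (cases "a = 0 \<and> p = 0") (auto simp: meval_def cCons_def)

lemma meval_add: "meval (p + q) M = meval p M + meval q M"
proof (induction p arbitrary: q)
  case 0 then show ?case by simp
next
  case (pCons a p)
  obtain b q' where q: "q = pCons b q'" by (cases q) auto
  have "meval (p + q') M = meval p M + meval q' M" by (rule pCons.IH)
  then show ?case
    by (simp add: q meval_pCons mat_add matrix_add_ldistrib algebra_simps)
qed

lemma meval_smult: "meval (smult c p) M = mat c ** meval p M"
proof (induction p)
  case 0 then show ?case by simp
next
  case (pCons a p)
  have "mat c ** (M ** meval p M) = M ** (mat c ** meval p M)"
    by (metis mat_commute matrix_mul_assoc)
  then show ?case using pCons.IH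
    by (simp add: meval_pCons matrix_add_ldistrib mat_mat)
qed

lemma meval_mult: "meval (p * q) M = meval p M ** meval q M"
proof (induction p)
  case 0 then show ?case by simp
next
  case (pCons a p)
  have "meval (pCons a p * q) M = mat a ** meval q M + M ** meval (p * q) M"
    by (simp add: meval_add meval_smult meval_pCons)
  then show ?case using pCons.IH
    by (simp add: meval_pCons matrix_add_rdistrib matrix_mul_assoc)
qed

lemma meval_x: "meval [:0,1:] M = M"
  by (simp add: meval_pCons)

lemma meval_1: "meval 1 M = mat 1"
  by (simp add: meval_pCons one_pCons)

lemma meval_commute: "M ** meval p M = meval p M ** M"
  by (metis meval_mult meval_x mult.commute)

lemma meval_neg: "meval (- p) M = - meval p M"
  using meval_add[of p "-p" M] by (simp add: eq_neg_iff_add_eq_0 add.commute)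

lemma meval_diff: "meval (p - q) M = meval p M - meval q M"
  using meval_add[of p "-q" M] meval_neg[of q M] by simp

lemma meval_sum: "meval (\<Sum>i\<in>I. f i) M = (\<Sum>i\<in>I. meval (f i) M)"
  by (induction I rule: infinite_finite_induct) (auto simp: meval_add)

lemma meval_closed:
  assumes "\<And>a. P (mat a)" "\<And>X Y. P X \<Longrightarrow> P Y \<Longrightarrow> P (X + Y)"
    "\<And>X. P X \<Longrightarrow> M ** X = X ** M \<Longrightarrow> P (M ** X)"
  shows "P (meval p M)"
proof (induction p)
  case 0 then show ?case using assms(1)[of 0] by simp
next
  case (pCons a p)
  then show ?case using assms meval_commute[of M p] by (simp add: meval_pCons)
qed



lemma mat_of_real: "mat (complex_of_real r) ** X = r *\<^sub>R (X::complex^'d^'d)"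
  by (simp add: vec_eq_iff mat_mult_entry flip: scaleR_conv_of_real)

lemma meval_monom: "meval (monom c i) M = mat c ** meval ([:0,1:]^i) M"
  by (simp add: monom_altdef meval_smult)

lemma annihilating_poly:
  fixes M :: "complex^'d^'d"
  shows "\<exists>q. q \<noteq> 0 \<and> meval q M = 0"
proof -
  define P where "P k = meval ([:0,1:]^k) M" for k
  define D where "D = DIM(complex^'d^'d)"
  show ?thesis
  proof (cases "inj_on P {..D}")
    case False
    then obtain i j where ij: "i \<le> D" "j \<le> D" "i < j" "P i = P j"
      unfolding inj_on_def by (metis atMost_iff linorder_neqE_nat)
    define q :: "complex poly" where "q = monom 1 j - monom 1 i"
    have "coeff q j = 1" using ij by (simp add: q_def coeff_diff coeff_monom)
    then have "q \<noteq> 0" by auto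
    moreover have "meval q M = 0" using ij by (simp add: q_def meval_diff P_def meval_monom)
    ultimately show ?thesis by blast
  next
    case True
    define S where "S = P ` {..D}"
    have fin: "finite S" by (simp add: S_def)
    have "card S = Suc D" using True by (simp add: S_def card_image)
    then have "dependent S" using fin by (intro dependent_biggerset) (simp add: D_def)
    then obtain u where u: "\<exists>v\<in>S. u v \<noteq> 0" "(\<Sum>v\<in>S. u v *\<^sub>R v) = 0"
      using fin by (auto simp: dependent_finite)
    define q where "q = (\<Sum>i\<le>D. monom (complex_of_real (u (P i))) i)"
    have "meval q M = (\<Sum>i\<le>D. u (P i) *\<^sub>R P i)"
      by (simp add: q_def meval_sum meval_monom mat_of_real P_def)
    also have "\<dots> = (\<Sum>v\<in>S. u v *\<^sub>R v)"
      unfolding S_def using True by (simp add: sum.reindex)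
    finally have "meval q M = 0" using u by simp
    moreover have "q \<noteq> 0"
    proof -
      obtain i where i: "i \<le> D" "u (P i) \<noteq> 0" using u(1) by (auto simp: S_def)
      have "coeff q i = complex_of_real (u (P i))"
        using i by (simp add: q_def coeff_sum coeff_monom)
      then show ?thesis using i by auto
    qed
    ultimately show ?thesis by blast
  qed
qed

lemma inv_left: "invertible (A::'a::field^'n^'n) \<Longrightarrow> matrix_inv A ** A = mat 1"
  unfolding invertible_def matrix_inv_def by (rule someI2_ex) auto

lemma inv_right: "invertible (A::'a::field^'n^'n) \<Longrightarrow> A ** matrix_inv A = mat 1"
  unfolding invertible_def matrix_inv_def by (rule someI2_ex) auto

lemma annihilating_poly_nz:
  fixes M :: "complex^'d^'d"
  assumes "invertible M"
  shows "\<exists>g. poly g 0 \<noteq> 0 \<and> meval g M = 0"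
proof -
  obtain q where q: "q \<noteq> 0" "meval q M = 0" using annihilating_poly by blast
  obtain g where g: "q = [:0,1:]^(order 0 q) * g" "\<not> [:0,1:] dvd g"
    using order_decomp[OF q(1), of 0] by auto
  have "\<And>k. meval ([:0,1:]^k * g) M = 0 \<Longrightarrow> meval g M = 0"
  proof -
    fix k show "meval ([:0,1:]^k * g) M = 0 \<Longrightarrow> meval g M = 0"
    proof (induction k)
      case 0 then show ?case by simp
    next
      case (Suc k)
      have "[:0,1:]^(Suc k) * g = [:0,1:] * ([:0,1:]^k * g)" by (simp add: mult.assoc)
      then have "M ** meval ([:0,1:]^k * g) M = 0"
        using Suc.prems by (metis meval_mult meval_x)
      then have "matrix_inv M ** (M ** meval ([:0,1:]^k * g) M) = 0" by simp
      then have "meval ([:0,1:]^k * g) M = 0"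
        by (simp add: matrix_mul_assoc inv_left[OF assms])
      then show ?case by (rule Suc.IH)
    qed
  qed
  then have "meval g M = 0" using q g by metis
  moreover have "poly g 0 \<noteq> 0" using g(2) by (simp add: dvd_iff_poly_eq_0)
  ultimately show ?thesis by blast
qed

lemma matrix_sqrt:
  fixes M :: "complex^'d^'d"
  assumes "invertible M"
  shows "\<exists>p. meval p M ** meval p M = M"
proof -
  obtain g where g: "poly g 0 \<noteq> 0" "meval g M = 0" using annihilating_poly_nz[OF assms] by blast
  obtain p where "g dvd p^2 - [:0,1:]" using poly_sqrt_mod[OF g(1)] by blast
  then obtain h where h: "p^2 - [:0,1:] = g * h" by (auto elim: dvdE)
  then have "p * p = [:0,1:] + g * h" by (simp add: power2_eq_square algebra_simps)
  then have "meval (p * p) M = M" by (simp add: meval_add meval_mult meval_x g(2))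
  then show ?thesis by (auto simp: meval_mult)
qed



definition sop :: "nat \<Rightarrow> nat \<Rightarrow> complex^'d^'d \<Rightarrow> ('d::finite list \<Rightarrow> complex) \<Rightarrow> ('d list \<Rightarrow> complex)" where
  "sop n k X T = kron_apply (\<lambda>i. if i = k then X else mat 1) n T"

lemma finite_len: "finite {ys::'d::finite list. length ys = n}"
  using finite_lists_length_eq[of "UNIV::'d set" n] by simp

lemma sum_prod_lists:
  fixes f :: "nat \<Rightarrow> 'd::finite \<Rightarrow> complex"
  shows "(\<Sum>ys\<in>{ys::'d::finite list. length ys = n}. \<Prod>k<n. f k (ys!k)) = (\<Prod>k<n. \<Sum>y\<in>UNIV. f k y)"
proof (induction n arbitrary: f)
  case 0
  have "{ys::'d list. length ys = 0} = {[]}" by auto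
  then show ?case by simp
next
  case (Suc n)
  have e: "{ys::'d list. length ys = Suc n} = (\<lambda>(y,ys). y#ys) ` (UNIV \<times> {ys. length ys = n})"
    by (auto simp: length_Suc_conv image_iff)
  have inj: "inj_on (\<lambda>(y,ys). y#ys) (UNIV \<times> {ys::'d list. length ys = n})"
    by (auto simp: inj_on_def)
  have "(\<Sum>ys\<in>{ys::'d list. length ys = Suc n}. \<Prod>k<Suc n. f k (ys!k))
      = (\<Sum>(y,ys)\<in>UNIV \<times> {ys::'d list. length ys = n}. f 0 y * (\<Prod>k<n. f (Suc k) (ys!k)))"
    unfolding e sum.reindex[OF inj] prod.lessThan_Suc_shift by (simp add: case_prod_beta)
  also have "\<dots> = (\<Sum>y\<in>UNIV. \<Sum>ys\<in>{ys::'d list. length ys = n}. f 0 y * (\<Prod>k<n. f (Suc k) (ys!k)))"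
    by (rule sum.cartesian_product[symmetric])
  also have "\<dots> = (\<Sum>y\<in>UNIV. f 0 y) * (\<Sum>ys\<in>{ys::'d list. length ys = n}. \<Prod>k<n. f (Suc k) (ys!k))"
    by (simp add: sum_product)
  also have "\<dots> = (\<Prod>k<Suc n. \<Sum>y\<in>UNIV. f k y)"
    unfolding prod.lessThan_Suc_shift using Suc.IH[of "\<lambda>k. f (Suc k)"] by simp
  finally show ?case .
qed

lemma kron_comp:
  fixes T :: "'d::finite list \<Rightarrow> complex"
  shows "kron_apply As n (kron_apply Bs n T) = kron_apply (\<lambda>k. As k ** Bs k) n T"
proof (rule ext)
  fix xs :: "'d::finite list"
  let ?L = "{ys::'d list. length ys = n}"
  show "kron_apply As n (kron_apply Bs n T) xs = kron_apply (\<lambda>k. As k ** Bs k) n T xs"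
  proof (cases "length xs = n")
    case False then show ?thesis by (simp add: kron_apply_def)
  next
    case True
    have "kron_apply As n (kron_apply Bs n T) xs = (\<Sum>ys\<in>?L. \<Sum>zs\<in>?L.
        (\<Prod>k<n. As k $ (xs!k) $ (ys!k)) * ((\<Prod>k<n. Bs k $ (ys!k) $ (zs!k)) * T zs))"
      using True by (simp add: kron_apply_def sum_distrib_left)
    also have "\<dots> = (\<Sum>zs\<in>?L. (\<Sum>ys\<in>?L. \<Prod>k<n. As k $ (xs!k) $ (ys!k) * Bs k $ (ys!k) $ (zs!k)) * T zs)"
      by (subst sum.swap) (simp add: sum_distrib_right prod.distrib mult.assoc)
    also have "\<dots> = (\<Sum>zs\<in>?L. (\<Prod>k<n. \<Sum>y\<in>UNIV. As k $ (xs!k) $ y * Bs k $ y $ (zs!k)) * T zs)"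
    proof (rule sum.cong[OF refl])
      fix zs show "(\<Sum>ys\<in>?L. \<Prod>k<n. As k $ (xs!k) $ (ys!k) * Bs k $ (ys!k) $ (zs!k)) * T zs
         = (\<Prod>k<n. \<Sum>y\<in>UNIV. As k $ (xs!k) $ y * Bs k $ y $ (zs!k)) * T zs"
        using sum_prod_lists[of "\<lambda>k y. As k $ (xs!k) $ y * Bs k $ y $ (zs!k)" n] by simp
    qed
    also have "\<dots> = kron_apply (\<lambda>k. As k ** Bs k) n T xs"
      using True by (simp add: kron_apply_def matrix_matrix_mult_def)
    finally show ?thesis .
  qed
qed

lemma kron_cong: "(\<And>k. k < n \<Longrightarrow> As k = Bs k) \<Longrightarrow> kron_apply As n T = kron_apply Bs n T"
  unfolding kron_apply_def by (intro ext) (auto intro!: sum.cong prod.cong)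

lemma kron_is_tensor: "is_tensor n (kron_apply As n T)"
  by (simp add: is_tensor_def kron_apply_def)

lemma sop_is_tensor: "is_tensor n (sop n k X T)"
  by (simp add: sop_def kron_is_tensor)

lemma kron_id:
  fixes T :: "'d::finite list \<Rightarrow> complex"
  assumes "is_tensor n T"
  shows "kron_apply (\<lambda>_. mat 1) n T = T"
proof (rule ext)
  fix xs :: "'d list"
  show "kron_apply (\<lambda>_. mat 1) n T xs = T xs"
  proof (cases "length xs = n")
    case False then show ?thesis using assms by (simp add: kron_apply_def is_tensor_def)
  next
    case True
    have p: "(\<Prod>k<n. (mat 1 :: complex^'d^'d) $ (xs!k) $ (ys!k)) = (if ys = xs then 1 else 0)"
      if "length ys = n" for ys
    proof (cases "ys = xs")
      case True then show ?thesis by (simp add: mat_def)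
    next
      case False
      have "\<not> (\<forall>k<n. xs!k = ys!k)" using False True that nth_equalityI[of xs ys] by auto
      then obtain k where k: "k < n" "xs!k \<noteq> ys!k" by blast
      then show ?thesis using False by (intro trans[OF prod_zero]) (auto simp: mat_def intro!: bexI[of _ k])
    qed
    have "kron_apply (\<lambda>_. mat 1) n T xs = (\<Sum>ys\<in>{ys. length ys = n}. (if ys = xs then 1 else 0) * T ys)"
      using True by (simp add: kron_apply_def) (rule sum.cong, simp, simp add: p)
    also have "\<dots> = (\<Sum>ys\<in>{ys. length ys = n}. if xs = ys then T ys else 0)"
      by (rule sum.cong) auto
    also have "\<dots> = T xs" using True by (simp add: finite_len)
    finally show ?thesis .
  qed
qed

lemma sop_sop_same: "sop n k X (sop n k Y T) = sop n k (X ** Y) T"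
  unfolding sop_def kron_comp by (rule kron_cong) simp

lemma sop_comm: "j \<noteq> k \<Longrightarrow> sop n j X (sop n k Y T) = sop n k Y (sop n j X T)"
  unfolding sop_def kron_comp by (rule kron_cong) auto

lemma sop_id: "is_tensor n T \<Longrightarrow> sop n k (mat 1) T = T"
  unfolding sop_def by (simp add: kron_id)

lemma kron_sop: "kron_apply As n (sop n k X T) = kron_apply (\<lambda>i. if i = k then As i ** X else As i) n T"
  unfolding sop_def kron_comp by (rule kron_cong) simp

lemma sop_kron: "sop n k X (kron_apply As n T) = kron_apply (\<lambda>i. if i = k then X ** As i else As i) n T"
  unfolding sop_def kron_comp by (rule kron_cong) simp



lemma kron_perm:
  fixes T :: "'d::finite list \<Rightarrow> complex"
  assumes s: "s permutes {..<n}" and symT: "\<forall>zs. length zs = n \<longrightarrow> T (permute_list s zs) = T zs"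
    and len: "length xs = n"
  shows "kron_apply As n T (permute_list s xs) = kron_apply (\<lambda>k. As (inv s k)) n T xs"
proof -
  let ?L = "{ys::'d list. length ys = n}"
  have si: "inv s permutes {..<n}" using s by (rule permutes_inv)
  have nth: "permute_list p zs ! i = zs ! p i" if "p permutes {..<n}" "length zs = n" "i < n" for p zs i
    using permute_list_nth[of p zs i] that by simp
  have bij: "bij_betw (permute_list s) ?L ?L"
  proof (rule bij_betw_byWitness[where f'="permute_list (inv s)"])
    show "\<forall>a\<in>?L. permute_list (inv s) (permute_list s a) = a"
    proof
      fix a assume a: "a \<in> ?L"
      show "permute_list (inv s) (permute_list s a) = a"
      proof (rule nth_equalityI)
        show "length (permute_list (inv s) (permute_list s a)) = length a" by simp
        fix i assume "i < length (permute_list (inv s) (permute_list s a))"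
        then have i: "i < n" using a by simp
        have "inv s i < n" using permutes_in_image[OF si] i by simp
        then show "permute_list (inv s) (permute_list s a) ! i = a ! i"
          using a i nth[OF si, of "permute_list s a" i] nth[OF s, of a "inv s i"]
          by (simp add: permutes_inverses[OF s])
      qed
    qed
    show "\<forall>a\<in>?L. permute_list s (permute_list (inv s) a) = a"
    proof
      fix a assume a: "a \<in> ?L"
      show "permute_list s (permute_list (inv s) a) = a"
      proof (rule nth_equalityI)
        show "length (permute_list s (permute_list (inv s) a)) = length a" by simp
        fix i assume "i < length (permute_list s (permute_list (inv s) a))"
        then have i: "i < n" using a by simp
        have "s i < n" using permutes_in_image[OF s] i by simp
        then show "permute_list s (permute_list (inv s) a) ! i = a ! i"
          using a i nth[OF s, of "permute_list (inv s) a" i] nth[OF si, of a "s i"]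
          by (simp add: permutes_inverses[OF s])
      qed
    qed
  qed auto
  have "kron_apply As n T (permute_list s xs) = (\<Sum>ys\<in>?L. (\<Prod>k<n. As k $ (xs ! s k) $ (ys!k)) * T ys)"
    using len by (simp add: kron_apply_def nth[OF s])
  also have "\<dots> = (\<Sum>zs\<in>?L. (\<Prod>k<n. As k $ (xs ! s k) $ (permute_list s zs ! k)) * T (permute_list s zs))"
    by (rule sum.reindex_bij_betw[OF bij, symmetric])
  also have "\<dots> = (\<Sum>zs\<in>?L. (\<Prod>k<n. As k $ (xs ! s k) $ (zs ! s k)) * T zs)"
    using symT by (intro sum.cong refl) (simp add: nth[OF s])
  also have "\<dots> = (\<Sum>zs\<in>?L. (\<Prod>m<n. As (inv s m) $ (xs ! m) $ (zs ! m)) * T zs)"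
  proof (intro sum.cong refl arg_cong2[where f="(*)"])
    fix zs
    have "(\<Prod>m<n. As (inv s m) $ (xs ! m) $ (zs ! m)) = (\<Prod>k<n. As (inv s (s k)) $ (xs ! s k) $ (zs ! s k))"
      using prod.reindex_bij_betw[OF permutes_imp_bij[OF s], of "\<lambda>m. As (inv s m) $ (xs ! m) $ (zs ! m)"]
      by (simp add: lessThan_def)
    then show "(\<Prod>k<n. As k $ (xs ! s k) $ (zs ! s k)) = (\<Prod>m<n. As (inv s m) $ (xs ! m) $ (zs ! m))"
      by (simp add: permutes_inverses[OF s])
  qed
  also have "\<dots> = kron_apply (\<lambda>k. As (inv s k)) n T xs"
    using len by (simp add: kron_apply_def)
  finally show ?thesis .
qed

lemma sym_tensor: "T \<in> sym_space n \<Longrightarrow> is_tensor n T"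
  by (simp add: sym_space_def)

lemma sym_perm: "T \<in> sym_space n \<Longrightarrow> p permutes {..<n} \<Longrightarrow> length xs = n \<Longrightarrow> T (permute_list p xs) = T xs"
  by (simp add: sym_space_def)

lemma sop_perm:
  assumes T: "T \<in> sym_space n" and s: "s permutes {..<n}" and len: "length xs = n"
  shows "sop n k X T (permute_list s xs) = sop n (s k) X T xs"
proof -
  have "sop n k X T (permute_list s xs) = kron_apply (\<lambda>i. if inv s i = k then X else mat 1) n T xs"
    unfolding sop_def using kron_perm[OF s _ len] sym_perm[OF T s] by simp
  also have "\<dots> = sop n (s k) X T xs"
    unfolding sop_def
  proof (rule fun_cong[where x=xs], rule kron_cong)
    fix i assume "i < n"
    show "(if inv s i = k then X else mat 1) = (if i = s k then X else mat 1)"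
      using permutes_inv_eq[OF s, of i k] by auto
  qed
  finally show ?thesis .
qed

lemma sym_slot:
  assumes psi: "psi \<in> sym_space n" and B: "sop n 0 B psi \<in> sym_space n" and j: "j < n"
  shows "sop n j B psi = sop n 0 B psi"
proof (rule ext)
  fix xs :: "'a list"
  show "sop n j B psi xs = sop n 0 B psi xs"
  proof (cases "length xs = n")
    case False then show ?thesis by (simp add: sop_def kron_apply_def)
  next
    case True
    define t where "t = Transposition.transpose 0 j"
    have t: "t permutes {..<n}" unfolding t_def using j by (intro permutes_swap_id) auto
    have "sop n 0 B psi xs = sop n 0 B psi (permute_list t xs)"
      using sym_perm[OF B t True] by simp
    also have "\<dots> = sop n (t 0) B psi xs" by (rule sop_perm[OF psi t True])
    finally show ?thesis by (simp add: t_def)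
  qed
qed

lemma sym_from_slots:
  fixes phi :: "'a::finite list \<Rightarrow> complex"
  assumes phi: "phi \<in> sym_space n" and n: "0 < n" and sl: "\<forall>j<n. sop n j C phi = sop n 0 C phi"
  shows "sop n 0 C phi \<in> sym_space n"
  unfolding sym_space_def
proof (intro CollectI conjI allI impI)
  show "is_tensor n (sop n 0 C phi)" by (rule sop_is_tensor)
  fix p and xs :: "'a list" assume a: "p permutes {..<n} \<and> length xs = n"
  have "p 0 < n" using permutes_in_image[of p "{..<n}" 0] a n by simp
  then have "sop n (p 0) C phi = sop n 0 C phi" using sl by blast
  then show "sop n 0 C phi (permute_list p xs) = sop n 0 C phi xs"
    using sop_perm[OF phi, of p xs 0 C] a by simp
qed



lemma invertible_inv: "invertible (A::'a::field^'n^'n) \<Longrightarrow> invertible (matrix_inv A)"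
  unfolding invertible_def using inv_left inv_right invertible_def by metis

lemma inv_inv: "invertible (A::'a::field^'n^'n) \<Longrightarrow> matrix_inv (matrix_inv A) = A"
proof -
  assume a: "invertible A"
  have "matrix_inv (matrix_inv A) = matrix_inv (matrix_inv A) ** (matrix_inv A ** A)"
    using inv_left[OF a] by simp
  also have "\<dots> = A" using inv_left[OF invertible_inv[OF a]] by (simp add: matrix_mul_assoc)
  finally show ?thesis .
qed

lemma kron_inv:
  fixes psi :: "'d::finite list \<Rightarrow> complex"
  assumes "is_tensor n psi" "\<forall>k<n. invertible (As k)"
  shows "kron_apply (\<lambda>k. matrix_inv (As k)) n (kron_apply As n psi) = psi"
proof -
  have "kron_apply (\<lambda>k. matrix_inv (As k)) n (kron_apply As n psi) = kron_apply (\<lambda>_. mat 1) n psi"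
    unfolding kron_comp using assms(2) by (intro kron_cong) (simp add: inv_left)
  then show ?thesis using kron_id[OF assms(1)] by simp
qed

lemma swap_stab:
  fixes psi :: "'d::finite list \<Rightarrow> complex"
  assumes psi: "psi \<in> sym_space n" and phi: "kron_apply As n psi \<in> sym_space n"
    and inv: "\<forall>k<n. invertible (As k)" and j: "j < n" "j \<noteq> 0"
  shows "sop n 0 (matrix_inv (As j) ** As 0) psi = sop n j (matrix_inv (As j) ** As 0) psi \<and>
         sop n j (matrix_inv (As 0) ** As j) psi = sop n 0 (matrix_inv (As 0) ** As j) psi"
proof -
  define M where "M = matrix_inv (As j) ** As 0"
  define N where "N = matrix_inv (As 0) ** As j"
  define t where "t = Transposition.transpose 0 j"
  have t: "t permutes {..<n}" unfolding t_def using j by (intro permutes_swap_id) auto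
  have it: "inv t = t" by (simp add: t_def)
  have e1: "kron_apply As n psi = kron_apply (\<lambda>k. As (t k)) n psi"
  proof (rule ext)
    fix xs :: "'d list"
    show "kron_apply As n psi xs = kron_apply (\<lambda>k. As (t k)) n psi xs"
    proof (cases "length xs = n")
      case False then show ?thesis by (simp add: kron_apply_def)
    next
      case True
      have "kron_apply As n psi xs = kron_apply As n psi (permute_list t xs)"
        using sym_perm[OF phi t True] by simp
      also have "\<dots> = kron_apply (\<lambda>k. As (inv t k)) n psi xs"
        using kron_perm[OF t _ True] sym_perm[OF psi t] by simp
      finally show ?thesis by (simp add: it)
    qed
  qed
  have A0: "invertible (As 0)" and Aj: "invertible (As j)" using inv j by auto
  have "psi = kron_apply (\<lambda>k. matrix_inv (As k)) n (kron_apply As n psi)"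
    using kron_inv[OF sym_tensor[OF psi] inv] by simp
  also have "\<dots> = kron_apply (\<lambda>k. matrix_inv (As k) ** As (t k)) n psi"
    unfolding e1 kron_comp ..
  also have "\<dots> = sop n 0 N (sop n j M psi)"
    unfolding sop_def kron_comp
  proof (rule kron_cong)
    fix k assume k: "k < n"
    show "matrix_inv (As k) ** As (t k) = (if k = 0 then N else mat 1) ** (if k = j then M else mat 1)"
      using j inv k by (auto simp: t_def M_def N_def inv_left)
  qed
  finally have ps: "psi = sop n 0 N (sop n j M psi)" .
  have MN: "M ** N = mat 1"
  proof -
    have "M ** N = matrix_inv (As j) ** (As 0 ** matrix_inv (As 0)) ** As j"
      by (simp add: M_def N_def matrix_mul_assoc)
    then show ?thesis using inv_right[OF A0] inv_left[OF Aj] by simp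
  qed
  have NM: "N ** M = mat 1"
  proof -
    have "N ** M = matrix_inv (As 0) ** (As j ** matrix_inv (As j)) ** As 0"
      by (simp add: M_def N_def matrix_mul_assoc)
    then show ?thesis using inv_right[OF Aj] inv_left[OF A0] by simp
  qed
  have "sop n 0 M psi = sop n 0 M (sop n 0 N (sop n j M psi))" using ps by simp
  also have "\<dots> = sop n j M psi" by (simp add: sop_sop_same MN sop_id sop_is_tensor)
  finally have 1: "sop n 0 M psi = sop n j M psi" .
  have "sop n j N psi = sop n j N (sop n 0 N (sop n j M psi))" using ps by simp
  also have "\<dots> = sop n 0 N (sop n j N (sop n j M psi))" using j by (simp add: sop_comm)
  also have "\<dots> = sop n 0 N psi" by (simp add: sop_sop_same NM sop_id sym_tensor[OF psi])
  finally have 2: "sop n j N psi = sop n 0 N psi" .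
  show ?thesis using 1 2 by (simp add: M_def N_def)
qed

lemma sop_expand:
  fixes T :: "'d::finite list \<Rightarrow> complex"
  assumes k: "k < n" and len: "length xs = n"
  shows "sop n k X T xs = (\<Sum>ys\<in>{ys. length ys = n}. X $ (xs!k) $ (ys!k) *
            ((\<Prod>i\<in>{..<n}-{k}. (mat 1::complex^'d^'d) $ (xs!i) $ (ys!i)) * T ys))"
  unfolding sop_def kron_apply_def using len
proof (simp, intro sum.cong refl)
  fix ys
  have "(\<Prod>i<n. (if i = k then X else mat 1) $ (xs!i) $ (ys!i)) =
        (if k = k then X else mat 1) $ (xs!k) $ (ys!k) * (\<Prod>i\<in>{..<n}-{k}. (if i = k then X else mat 1) $ (xs!i) $ (ys!i))"
    using k by (intro prod.remove) auto
  also have "\<dots> = X $ (xs!k) $ (ys!k) * (\<Prod>i\<in>{..<n}-{k}. (mat 1::complex^'d^'d) $ (xs!i) $ (ys!i))"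
  proof -
    have "(\<Prod>i\<in>{..<n}-{k}. (if i = k then X else mat 1) $ (xs!i) $ (ys!i)) = (\<Prod>i\<in>{..<n}-{k}. (mat 1::complex^'d^'d) $ (xs!i) $ (ys!i))"
      by (rule prod.cong) auto
    then show ?thesis by simp
  qed
  finally show "(\<Prod>i<n. (if i = k then X else mat 1) $ (xs!i) $ (ys!i)) * T ys =
       X $ (xs!k) $ (ys!k) * ((\<Prod>i\<in>{..<n}-{k}. (mat 1::complex^'d^'d) $ (xs!i) $ (ys!i)) * T ys)"
    by simp
qed

lemma sop_add:
  fixes T :: "'d::finite list \<Rightarrow> complex"
  assumes k: "k < n"
  shows "sop n k (X + Y) T xs = sop n k X T xs + sop n k Y T xs"
proof (cases "length xs = n")
  case False then show ?thesis by (simp add: sop_def kron_apply_def)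
next
  case True then show ?thesis using k by (simp add: sop_expand sum.distrib distrib_right)
qed

lemma sop_smul:
  fixes T :: "'d::finite list \<Rightarrow> complex"
  assumes k: "k < n"
  shows "sop n k (mat a ** X) T xs = a * sop n k X T xs"
proof (cases "length xs = n")
  case False then show ?thesis by (simp add: sop_def kron_apply_def)
next
  case True then show ?thesis using k by (simp add: sop_expand sum_distrib_left mat_mult_entry mult.assoc)
qed

lemma sop_mat:
  fixes T :: "'d::finite list \<Rightarrow> complex"
  assumes k: "k < n" and T: "is_tensor n T"
  shows "sop n k (mat a) T xs = a * T xs"
  using sop_smul[OF k, of a "mat 1" T xs] sop_id[OF T, of k] by simp

lemma two_case:
  fixes psi :: "'d::finite list \<Rightarrow> complex"
  assumes psi: "psi \<in> sym_space 2" and phi: "kron_apply As 2 psi \<in> sym_space 2"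
    and inv: "\<forall>k<2. invertible (As k)"
  shows "\<exists>A. invertible A \<and> kron_apply (\<lambda>_. A) 2 psi = kron_apply As 2 psi"
proof -
  define M where "M = matrix_inv (As 1) ** As 0"
  have A0: "invertible (As 0)" and A1: "invertible (As 1)" using inv by auto
  have stab: "sop 2 0 M psi = sop 2 1 M psi"
    using swap_stab[OF psi phi inv, of 1] by (simp add: M_def)
  have Minv: "invertible M" unfolding M_def by (intro invertible_mult invertible_inv A0 A1)
  obtain p where p: "meval p M ** meval p M = M" using matrix_sqrt[OF Minv] by blast
  define R where "R = meval p M"
  have T: "is_tensor 2 psi" by (rule sym_tensor[OF psi])
  have PR: "sop 2 0 R psi = sop 2 1 R psi"
    unfolding R_def
  proof (rule meval_closed[where P="\<lambda>X. sop 2 0 X psi = sop 2 1 X psi"])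
    fix a show "sop 2 0 (mat a) psi = sop 2 1 (mat a) psi"
      by (rule ext) (simp add: sop_mat[OF _ T])
  next
    fix X Y assume a: "sop 2 0 X psi = sop 2 1 X psi" and b: "sop 2 0 Y psi = sop 2 1 Y psi"
    show "sop 2 0 (X + Y) psi = sop 2 1 (X + Y) psi"
    proof (rule ext)
      fix x show "sop 2 0 (X + Y) psi x = sop 2 1 (X + Y) psi x"
        using sop_add[of 0 2 X Y psi x] sop_add[of 1 2 X Y psi x] fun_cong[OF a, of x] fun_cong[OF b, of x]
        by simp
    qed
  next
    fix X assume X: "sop 2 0 X psi = sop 2 1 X psi" and c: "M ** X = X ** M"
    have "sop 2 0 (M ** X) psi = sop 2 0 M (sop 2 0 X psi)" by (simp add: sop_sop_same)
    also have "\<dots> = sop 2 0 M (sop 2 1 X psi)" using X by simp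
    also have "\<dots> = sop 2 1 X (sop 2 0 M psi)" by (simp add: sop_comm)
    also have "\<dots> = sop 2 1 X (sop 2 1 M psi)" using stab by simp
    also have "\<dots> = sop 2 1 (M ** X) psi" by (simp add: sop_sop_same c)
    finally show "sop 2 0 (M ** X) psi = sop 2 1 (M ** X) psi" .
  qed
  have Rinv: "invertible R"
  proof -
    have "R ** (R ** matrix_inv M) = mat 1"
      using p inv_right[OF Minv] by (simp add: R_def matrix_mul_assoc)
    then show ?thesis using invertible_right_inverse by blast
  qed
  define A where "A = As 1 ** R"
  have Ainv: "invertible A" unfolding A_def by (intro invertible_mult A1 Rinv)
  have "kron_apply (\<lambda>_. R) 2 psi = sop 2 0 R (sop 2 1 R psi)"
    unfolding sop_def kron_comp by (rule kron_cong) auto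
  also have "\<dots> = sop 2 0 R (sop 2 0 R psi)" by (simp only: PR)
  also have "\<dots> = sop 2 0 M psi"
    using p by (simp add: sop_sop_same R_def)
  finally have kR: "kron_apply (\<lambda>_. R) 2 psi = sop 2 0 M psi" .
  have "kron_apply (\<lambda>_. A) 2 psi = kron_apply (\<lambda>_. As 1) 2 (kron_apply (\<lambda>_. R) 2 psi)"
    unfolding kron_comp A_def ..
  also have "\<dots> = kron_apply (\<lambda>i. if i = 0 then As 1 ** M else As 1) 2 psi"
    unfolding kR kron_sop ..
  also have "\<dots> = kron_apply As 2 psi"
  proof (rule kron_cong)
    fix k :: nat assume "k < 2"
    then have "k = 0 \<or> k = 1" by auto
    moreover have "As 1 ** M = As 0"
      unfolding M_def using inv_right[OF A1] by (simp add: matrix_mul_assoc)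
    ultimately show "(if k = 0 then As 1 ** M else As 1) = As k" by auto
  qed
  finally show ?thesis using Ainv by blast
qed

lemma transfer:
  fixes psi :: "'d::finite list \<Rightarrow> complex"
  assumes psi: "psi \<in> sym_space n" and phi: "phi \<in> sym_space n" and A: "invertible A"
    and e: "kron_apply (\<lambda>_. A) n psi = phi" and n: "0 < n" and B: "sop n 0 B psi \<in> sym_space n"
  shows "sop n 0 (A ** B ** matrix_inv A) phi \<in> sym_space n"
proof (rule sym_from_slots[OF phi n], intro allI impI)
  fix j assume j: "j < n"
  have CA: "A ** B ** matrix_inv A ** A = A ** B"
    using inv_left[OF A] by (metis matrix_mul_assoc matrix_mul_rid)
  have "sop n j (A ** B ** matrix_inv A) phi = kron_apply (\<lambda>_. A) n (sop n j B psi)"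
    unfolding e[symmetric] sop_kron kron_sop CA ..
  also have "\<dots> = kron_apply (\<lambda>_. A) n (sop n 0 B psi)"
    using sym_slot[OF psi B j] by simp
  also have "\<dots> = sop n 0 (A ** B ** matrix_inv A) phi"
    unfolding e[symmetric] sop_kron kron_sop CA ..
  finally show "sop n j (A ** B ** matrix_inv A) phi = sop n 0 (A ** B ** matrix_inv A) phi" .
qed

lemma big:
  fixes psi :: "'d::finite list \<Rightarrow> complex"
  assumes n: "3 \<le> n" and psi: "psi \<in> sym_space n" and phi: "phi \<in> sym_space n"
    and inv: "\<forall>k<n. invertible (As k)" and e: "kron_apply As n psi = phi"
    and B: "sop n 0 B psi \<in> sym_space n"
  shows "sop n 0 (As 0 ** B ** matrix_inv (As 0)) phi \<in> sym_space n"
proof (rule sym_from_slots[OF phi], use n in simp, intro allI impI)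
  fix j assume j: "j < n"
  define C where "C = As 0 ** B ** matrix_inv (As 0)"
  show "sop n j (As 0 ** B ** matrix_inv (As 0)) phi = sop n 0 (As 0 ** B ** matrix_inv (As 0)) phi"
  proof (cases "j = 0")
    case True then show ?thesis by simp
  next
    case False
    define m where "m = (if j = 1 then 2 else 1::nat)"
    have m: "m < n" "m \<noteq> 0" "m \<noteq> j" using n by (auto simp: m_def)
    define M where "M = matrix_inv (As j) ** As 0"
    define N where "N = matrix_inv (As 0) ** As j"
    have A0: "invertible (As 0)" and Aj: "invertible (As j)" using inv j n by auto
    have stab: "sop n 0 M psi = sop n j M psi" "sop n j N psi = sop n 0 N psi"
      using swap_stab[OF psi _ inv j False] e phi by (auto simp: M_def N_def)
    have NM: "N ** M = mat 1"
    proof -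
      have "N ** M = matrix_inv (As 0) ** (As j ** matrix_inv (As j)) ** As 0"
        by (simp add: M_def N_def matrix_mul_assoc)
      then show ?thesis using inv_right[OF Aj] inv_left[OF A0] by simp
    qed
    have sj: "sop n j B psi = sop n 0 B psi" by (rule sym_slot[OF psi B j])
    have sm: "sop n m B psi = sop n 0 B psi" by (rule sym_slot[OF psi B m(1)])
    have c0: "C ** As 0 = As 0 ** B"
      unfolding C_def using inv_left[OF A0] by (metis matrix_mul_assoc matrix_mul_rid)
    have cj: "C ** As j = As j ** (M ** B ** N)"
    proof -
      have "As j ** (M ** B ** N) = (As j ** matrix_inv (As j)) ** As 0 ** B ** N"
        by (simp add: M_def matrix_mul_assoc)
      also have "\<dots> = As 0 ** B ** N" using inv_right[OF Aj] by simp
      also have "\<dots> = C ** As j" by (simp add: C_def N_def matrix_mul_assoc)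
      finally show ?thesis by simp
    qed
    have key: "sop n j (M ** B ** N) psi = sop n 0 B psi"
    proof -
      have "sop n j (M ** B ** N) psi = sop n j M (sop n j B (sop n j N psi))"
        by (simp add: sop_sop_same matrix_mul_assoc)
      also have "\<dots> = sop n j M (sop n j B (sop n 0 N psi))" using stab by simp
      also have "\<dots> = sop n 0 N (sop n j M (sop n j B psi))" using False by (simp add: sop_comm)
      also have "\<dots> = sop n 0 N (sop n j M (sop n m B psi))" using sj sm by simp
      also have "\<dots> = sop n 0 N (sop n m B (sop n j M psi))" using m by (simp add: sop_comm)
      also have "\<dots> = sop n 0 N (sop n m B (sop n 0 M psi))" using stab by simp
      also have "\<dots> = sop n m B (sop n 0 N (sop n 0 M psi))" using m by (simp add: sop_comm)
      also have "\<dots> = sop n m B psi" by (simp add: sop_sop_same NM sop_id sym_tensor[OF psi])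
      finally show ?thesis using sm by simp
    qed
    have "sop n j C phi = kron_apply As n (sop n j (M ** B ** N) psi)"
      unfolding e[symmetric] sop_kron kron_sop by (rule kron_cong) (simp add: cj)
    also have "\<dots> = kron_apply As n (sop n 0 B psi)" by (simp add: key)
    also have "\<dots> = sop n 0 C phi"
      unfolding e[symmetric] sop_kron kron_sop by (rule kron_cong) (simp add: c0)
    finally show ?thesis by (simp add: C_def)
  qed
qed


theorem mainTheorem9:
  fixes n :: nat and psi phi :: "'d::finite list \<Rightarrow> complex"
    and As :: "nat \<Rightarrow> complex^'d^'d"
  assumes "n \<ge> 2"
    and "psi \<in> sym_space n" and "phi \<in> sym_space n"
    and "\<forall>k<n. invertible (As k)"
    and "kron_apply As n psi = phi"
  shows "\<exists>A :: complex^'d^'d. invertible A \<and>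
      (\<forall>B. first_apply B n psi \<in> sym_space n \<longrightarrow>
           first_apply (A ** B ** matrix_inv A) n phi \<in> sym_space n) \<and>
      (\<forall>B'. first_apply B' n phi \<in> sym_space n \<longrightarrow>
           first_apply (matrix_inv A ** B' ** A) n psi \<in> sym_space n)"
proof -
  have fa: "\<And>Y T. first_apply Y n T = sop n 0 Y T" by (simp add: first_apply_def sop_def)
  note psi = assms(2) and phi = assms(3) and inv = assms(4) and e = assms(5)
  have n0: "0 < n" using assms(1) by simp
  obtain A where A: "invertible A"
    and P1: "\<And>B. sop n 0 B psi \<in> sym_space n \<Longrightarrow> sop n 0 (A ** B ** matrix_inv A) phi \<in> sym_space n"
    and P2: "\<And>B'. sop n 0 B' phi \<in> sym_space n \<Longrightarrow> sop n 0 (matrix_inv A ** B' ** A) psi \<in> sym_space n"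
  proof (cases "n = 2")
    case True
    have psi2: "psi \<in> sym_space 2" using psi True by simp
    have phi2: "kron_apply As 2 psi \<in> sym_space 2" using phi e True by simp
    have inv2: "\<forall>k<2. invertible (As k)" using inv True by simp
    obtain A where A: "invertible A" "kron_apply (\<lambda>_. A) 2 psi = kron_apply As 2 psi"
      using two_case[OF psi2 phi2 inv2] by blast
    have eA: "kron_apply (\<lambda>_. A) n psi = phi" using A e True by simp
    have eA': "kron_apply (\<lambda>_. matrix_inv A) n phi = psi"
      using kron_inv[OF sym_tensor[OF psi], of "\<lambda>_. A"] A(1) eA by simp
    have ii: "matrix_inv (matrix_inv A) = A" by (rule inv_inv[OF A(1)])
    show ?thesis
    proof (rule that[OF A(1)])
      fix B assume "sop n 0 B psi \<in> sym_space n"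
      then show "sop n 0 (A ** B ** matrix_inv A) phi \<in> sym_space n"
        by (rule transfer[OF psi phi A(1) eA n0])
    next
      fix B' assume "sop n 0 B' phi \<in> sym_space n"
      then have "sop n 0 (matrix_inv A ** B' ** matrix_inv (matrix_inv A)) psi \<in> sym_space n"
        by (rule transfer[OF phi psi invertible_inv[OF A(1)] eA' n0])
      then show "sop n 0 (matrix_inv A ** B' ** A) psi \<in> sym_space n" by (simp only: ii)
    qed
  next
    case False
    then have n3: "3 \<le> n" using assms(1) by simp
    have inv': "\<forall>k<n. invertible (matrix_inv (As k))" using inv invertible_inv by blast
    have e': "kron_apply (\<lambda>k. matrix_inv (As k)) n phi = psi"
      using kron_inv[OF sym_tensor[OF psi] inv] e by simp
    have A0: "invertible (As 0)" using inv n0 by simp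
    have ii: "matrix_inv (matrix_inv (As 0)) = As 0" by (rule inv_inv[OF A0])
    show ?thesis
    proof (rule that[OF A0])
      fix B assume "sop n 0 B psi \<in> sym_space n"
      then show "sop n 0 (As 0 ** B ** matrix_inv (As 0)) phi \<in> sym_space n"
        by (rule big[OF n3 psi phi inv e])
    next
      fix B' assume "sop n 0 B' phi \<in> sym_space n"
      then have "sop n 0 (matrix_inv (As 0) ** B' ** matrix_inv (matrix_inv (As 0))) psi \<in> sym_space n"
        by (rule big[OF n3 phi psi inv' e'])
      then show "sop n 0 (matrix_inv (As 0) ** B' ** As 0) psi \<in> sym_space n" by (simp only: ii)
    qed
  qed
  show ?thesis
    unfolding fa
  proof (intro exI[of _ A] conjI allI impI)
    show "invertible A" by (rule A)
  next
    fix B assume "sop n 0 B psi \<in> sym_space n"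
    then show "sop n 0 (A ** B ** matrix_inv A) phi \<in> sym_space n" by (rule P1)
  next
    fix B' assume "sop n 0 B' phi \<in> sym_space n"
    then show "sop n 0 (matrix_inv A ** B' ** A) psi \<in> sym_space n" by (rule P2)
  qed
qed

end
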